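(* Let $\mathcal{X}$ be a fuzzy random variable with values in $\mathcal{F}_c(\mathbb{R})$ such that $\mathrm{E}[\|\mathcal{X}_0\|]<\infty$. Then $D_1$ satisfies property P3b for the metric $\rho_1$: for every $A\in\mathcal{F}_c(\mathbb{R})$ with $D_1(A;\mathcal{X})=\sup\{D_1(B;\mathcal{X}):B\in\mathcal{F}_c(\mathbb{R})\}$ and all $U,V\in\mathcal{F}_c(\mathbb{R})$ with $\rho_1(A,V)=\rho_1(A,U)+\rho_1(U,V)$, we have $D_1(A;\mathcal{X})\ge D_1(U;\mathcal{X})\ge D_1(V;\mathcal{X})$.
   Context: $\mathcal{F}_c(\mathbb{R})$ is the set of functions $A:\mathbb{R}\to[0,1]$ whose $\alpha$-levels $A_\alpha=\{x:A(x)\ge\alpha\}$ ($\alpha\in(0,1]$) and $A_0=\overline{\{x:A(x)>0\}}$ are non-empty compact intervals. Support function: $s_A(u,\alpha)=\sup\{uv:v\in A_\alpha\}$, $u\in\{-1,1\}$, $\alpha\in[0,1]$. A fuzzy random variable on $(\Omega,\mathcal{A},\mathbb{P})$ is a map $\mathcal{X}:\Omega\to\mathcal{F}_c(\mathbb{R})$ with each $\omega\mapsto\mathcal{X}(\omega)_\alpha$ a random compact set; $\|\mathcal{X}_0\|=\sup\{|x|:x\in\mathcal{X}(\cdot)_0\}$. $\rho_1(A,B)=\int_{\{-1,1\}}\int_0^1|s_A(u,\alpha)-s_B(u,\alpha)|\,d\alpha\,d\mathcal{V}(u)$, $\mathcal{V}$ uniform on $\{-1,1\}$. The 1-natural depth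 is $D_1(A;\mathcal{X})=(1+\mathrm{E}[\rho_1(A,\mathcal{X})])^{-1}$ (set to $0$ if the expectation is infinite). *)

theory Defs
  imports "HOL-Probability.Probability"
begin

type_synonym fuzzy = "real \<Rightarrow> real"

definition lev :: "fuzzy \<Rightarrow> real \<Rightarrow> real set" where
  "lev A \<alpha> = (if \<alpha> = 0 then closure {x. 0 < A x} else {x. \<alpha> \<le> A x})"

definition Fc :: "fuzzy set" where
  "Fc = {A. (\<forall>x. 0 \<le> A x \<and> A x \<le> 1) \<and>
            (\<forall>\<alpha>\<in>{0..1}. lev A \<alpha> \<noteq> {} \<and> compact (lev A \<alpha>) \<and> is_interval (lev A \<alpha>))}"

text \<open>support function, u in {-1,1}\<close>
definition supp_fun :: "fuzzy \<Rightarrow> real \<Rightarrow> real \<Rightarrow> real" where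
  "supp_fun A u \<alpha> = Sup ((\<lambda>v. u * v) ` lev A \<alpha>)"

text \<open>rho_1 metric, V uniform on {-1,1}\<close>
definition rho1 :: "fuzzy \<Rightarrow> fuzzy \<Rightarrow> real" where
  "rho1 A B = (\<Sum>u\<in>{-1, 1::real}.
      (1/2) * (LBINT \<alpha>:{0..1}. \<bar>supp_fun A u \<alpha> - supp_fun B u \<alpha>\<bar>))"

text \<open>random compact set (Effros measurability)\<close>
definition random_compact_set :: "'w measure \<Rightarrow> ('w \<Rightarrow> real set) \<Rightarrow> bool" where
  "random_compact_set M C \<longleftrightarrow>
     (\<forall>\<omega>\<in>space M. compact (C \<omega>) \<and> C \<omega> \<noteq> {}) \<and>
     (\<forall>K. compact K \<longrightarrow> {\<omega>\<in>space M. C \<omega> \<inter> K \<noteq> {}} \<in> sets M)"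

definition fuzzy_rv :: "'w measure \<Rightarrow> ('w \<Rightarrow> fuzzy) \<Rightarrow> bool" where
  "fuzzy_rv M X \<longleftrightarrow> (\<forall>\<omega>\<in>space M. X \<omega> \<in> Fc) \<and>
     (\<forall>\<alpha>\<in>{0..1}. random_compact_set M (\<lambda>\<omega>. lev (X \<omega>) \<alpha>))"

definition norm0 :: "fuzzy \<Rightarrow> real" where
  "norm0 A = Sup ((\<lambda>x. \<bar>x\<bar>) ` lev A 0)"

definition D1 :: "'w measure \<Rightarrow> ('w \<Rightarrow> fuzzy) \<Rightarrow> fuzzy \<Rightarrow> real" where
  "D1 M X A = (let e = (\<integral>\<^sup>+ \<omega>. ennreal (rho1 A (X \<omega>)) \<partial>M) in
                if e = \<infinity> then 0 else 1 / (1 + enn2real e))"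

end

theory Submission
  imports Defs
begin


lemma lev_sub:
  assumes "0 \<le> \<beta>" "\<beta> \<le> \<alpha>" "0 < \<alpha>"
  shows "lev B \<alpha> \<subseteq> lev B \<beta>"
proof (cases "\<beta> = 0")
  case True
  have "{x. \<alpha> \<le> B x} \<subseteq> {x. 0 < B x}" using assms by auto
  also have "\<dots> \<subseteq> closure {x. 0 < B x}" by (rule closure_subset)
  finally show ?thesis using True assms by (simp add: lev_def)
next
  case False
  then show ?thesis using assms by (auto simp: lev_def)
qed

lemma Fc_lev:
  assumes "B \<in> Fc" "\<alpha> \<in> {0..1}"
  shows "lev B \<alpha> \<noteq> {}" "compact (lev B \<alpha>)" "is_interval (lev B \<alpha>)"
  using assms by (auto simp: Fc_def)

lemma sf_attained:
  assumes "B \<in> Fc" "\<alpha> \<in> {0..1}"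
  shows "\<exists>v\<in>lev B \<alpha>. supp_fun B u \<alpha> = u * v"
    and "\<And>v. v \<in> lev B \<alpha> \<Longrightarrow> u * v \<le> supp_fun B u \<alpha>"
proof -
  let ?S = "(\<lambda>v. u * v) ` lev B \<alpha>"
  have c: "compact ?S"
    by (rule compact_continuous_image) (auto intro!: continuous_on_mult_left continuous_on_id Fc_lev[OF assms])
  have ne: "?S \<noteq> {}" using Fc_lev[OF assms] by auto
  have bdd: "bdd_above ?S" using c by (intro bounded_imp_bdd_above compact_imp_bounded)
  have "Sup ?S \<in> ?S" using c ne bdd by (intro closed_contains_Sup compact_imp_closed) auto
  then show "\<exists>v\<in>lev B \<alpha>. supp_fun B u \<alpha> = u * v" by (auto simp: supp_fun_def)
  fix v assume "v \<in> lev B \<alpha>"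
  then show "u * v \<le> supp_fun B u \<alpha>" unfolding supp_fun_def using bdd
    by (intro cSup_upper) auto
qed

lemma sf_mono:
  assumes "B \<in> Fc" "0 \<le> \<beta>" "\<beta> \<le> \<alpha>" "\<alpha> \<le> 1"
  shows "supp_fun B u \<alpha> \<le> supp_fun B u \<beta>"
proof (cases "\<alpha> = \<beta>")
  case False
  then have "0 < \<alpha>" using assms by auto
  obtain v where v: "v \<in> lev B \<alpha>" "supp_fun B u \<alpha> = u * v"
    using sf_attained(1)[OF assms(1), of \<alpha> u] assms by auto
  have "v \<in> lev B \<beta>" using lev_sub[OF assms(2,3) \<open>0 < \<alpha>\<close>] v by auto
  then show ?thesis using v sf_attained(2)[OF assms(1), of \<beta> v u] assms by auto
qed simp

lemma real_ge_from_below: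
  fixes a b :: real
  assumes "0 < b" "\<And>c. 0 < c \<Longrightarrow> c < b \<Longrightarrow> c \<le> a"
  shows "b \<le> a"
proof (rule ccontr)
  assume "\<not> b \<le> a"
  define c where "c = max (b/2) ((a + b)/2)"
  have "0 < c" "c < b" using assms \<open>\<not> b \<le> a\<close> by (auto simp: c_def)
  then have "c \<le> a" using assms by auto
  then show False using \<open>\<not> b \<le> a\<close> unfolding c_def by auto
qed

lemma interval_mem:
  fixes S :: "real set"
  assumes "is_interval S" "a \<in> S" "b \<in> S" "a \<le> x" "x \<le> b"
  shows "x \<in> S"
  using assms unfolding is_interval_1 by blast

lemma sf_LC:
  assumes B: "B \<in> Fc" and u: "u \<in> {-1, 1}" and a: "0 < \<alpha>" "\<alpha> \<le> 1"
    and H: "\<forall>\<beta>\<in>{0<..<\<alpha>}. c \<le> supp_fun B u \<beta>"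
  shows "c \<le> supp_fun B u \<alpha>"
proof -
  obtain w where w: "w \<in> lev B \<alpha>" using Fc_lev(1)[OF B, of \<alpha>] a by auto
  have uu: "u * u = 1" using u by auto
  show ?thesis
  proof (cases "c \<le> u * w")
    case True
    then show ?thesis using sf_attained(2)[OF B, of \<alpha> w u] a w by auto
  next
    case False
    have "u * c \<in> lev B \<beta>" if b: "\<beta> \<in> {0<..<\<alpha>}" for \<beta>
    proof -
      obtain v where v: "v \<in> lev B \<beta>" "supp_fun B u \<beta> = u * v"
        using sf_attained(1)[OF B, of \<beta> u] b a by auto
      have wb: "w \<in> lev B \<beta>" using lev_sub[of \<beta> \<alpha> B] b a w by auto
      have "c \<le> supp_fun B u \<beta>" using H b by blast
      then have "c \<le> u * v" using v(2) by simp
      have iv: "is_interval (lev B \<beta>)" using Fc_lev(3)[OF B, of \<beta>] b a by auto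
      show ?thesis
      proof (cases "u = 1")
        case True
        then have "w \<le> c" "c \<le> v" using False \<open>c \<le> u * v\<close> by auto
        then show ?thesis using interval_mem[OF iv wb v(1)] True by simp
      next
        case False
        then have "u = -1" using u by auto
        then have "v \<le> -c" "-c \<le> w" using \<open>\<not> c \<le> u * w\<close> \<open>c \<le> u * v\<close> by auto
        then show ?thesis using interval_mem[OF iv v(1) wb] \<open>u = -1\<close> by simp
      qed
    qed
    then have "\<beta> \<le> B (u * c)" if "\<beta> \<in> {0<..<\<alpha>}" for \<beta>
      using that by (auto simp: lev_def)
    then have "\<alpha> \<le> B (u * c)" using a by (rule_tac real_ge_from_below) auto
    then have "u * c \<in> lev B \<alpha>" using a by (auto simp: lev_def)
    then have "u * (u * c) \<le> supp_fun B u \<alpha>" using sf_attained(2)[OF B, of \<alpha>] a by auto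
    then show ?thesis using uu by (simp add: mult.assoc[symmetric])
  qed
qed

lemma sf_bound:
  assumes B: "B \<in> Fc" and u: "u \<in> {-1, 1}" and a: "\<alpha> \<in> {0..1}"
  shows "\<bar>supp_fun B u \<alpha>\<bar> \<le> norm0 B"
proof -
  obtain v where v: "v \<in> lev B \<alpha>" "supp_fun B u \<alpha> = u * v"
    using sf_attained(1)[OF B a] by auto
  have "v \<in> lev B 0"
    using v lev_sub[of 0 \<alpha> B] a by (cases "\<alpha> = 0") auto
  have c: "compact (abs ` lev B 0)"
    by (rule compact_continuous_image) (auto intro!: continuous_on_rabs continuous_on_id Fc_lev[OF B])
  then have "bdd_above (abs ` lev B 0)" by (intro bounded_imp_bdd_above compact_imp_bounded)
  then have "\<bar>v\<bar> \<le> norm0 B" unfolding norm0_def using \<open>v \<in> lev B 0\<close> by (intro cSup_upper) auto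
  then show ?thesis using v u by (auto simp: abs_mult)
qed

lemma sf_sum_nonneg:
  assumes B: "B \<in> Fc" and a: "\<alpha> \<in> {0..1}"
  shows "0 \<le> supp_fun B 1 \<alpha> + supp_fun B (-1) \<alpha>"
proof -
  obtain v where v: "v \<in> lev B \<alpha>" using Fc_lev(1)[OF B a] by auto
  show ?thesis using sf_attained(2)[OF B a v, of 1] sf_attained(2)[OF B a v, of "-1"] by auto
qed



definition LC :: "(real \<Rightarrow> real) \<Rightarrow> real \<Rightarrow> bool" where
  "LC f \<alpha> \<longleftrightarrow> (\<forall>c. (\<forall>\<beta>\<in>{0<..<\<alpha>}. c \<le> f \<beta>) \<longrightarrow> c \<le> f \<alpha>)"

definition anti01 :: "(real \<Rightarrow> real) \<Rightarrow> bool" where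
  "anti01 f \<longleftrightarrow> (\<forall>x y. 0 \<le> x \<longrightarrow> x \<le> y \<longrightarrow> y \<le> 1 \<longrightarrow> f y \<le> f x)"

lemma LC_tendsto:
  assumes an: "anti01 f" and lc: "LC f \<alpha>" and a: "0 < \<alpha>" "\<alpha> \<le> 1"
  shows "(f \<longlongrightarrow> f \<alpha>) (at_left \<alpha>)"
  unfolding tendsto_iff
proof (intro allI impI)
  fix e :: real assume e: "0 < e"
  have "\<not> (\<forall>\<beta>\<in>{0<..<\<alpha>}. f \<alpha> + e \<le> f \<beta>)"
    using lc e unfolding LC_def by force
  then obtain b0 where b0: "b0 \<in> {0<..<\<alpha>}" "f b0 < f \<alpha> + e" by force
  have "dist (f x) (f \<alpha>) < e" if x: "x \<in> {b0<..<\<alpha>}" for x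
  proof -
    have "f \<alpha> \<le> f x" using an x b0 a unfolding anti01_def by auto
    moreover have "f x \<le> f b0" using an x b0 a unfolding anti01_def by auto
    ultimately show "dist (f x) (f \<alpha>) < e" using b0 by (auto simp: dist_real_def)
  qed
  then show "\<forall>\<^sub>F x in at_left \<alpha>. dist (f x) (f \<alpha>) < e"
    using eventually_at_left_real[of b0 \<alpha>] b0 by (auto elim: eventually_mono)
qed

definition bn :: "nat \<Rightarrow> real \<Rightarrow> real" where
  "bn n \<alpha> = min 1 (max 0 ((real_of_int \<lceil>real (Suc n) * \<alpha>\<rceil> - 1) / real (Suc n)))"

lemma bn_zero: "bn n 0 = 0"
  by (simp add: bn_def)

lemma bn_props:
  assumes "0 < \<alpha>" "\<alpha> \<le> 1"
  shows "bn n \<alpha> < \<alpha>" "0 \<le> bn n \<alpha>" "\<alpha> - inverse (real (Suc n)) \<le> bn n \<alpha>"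
proof -
  let ?N = "real (Suc n)"
  have N: "0 < ?N" by simp
  have c1: "real_of_int \<lceil>?N * \<alpha>\<rceil> < ?N * \<alpha> + 1" by linarith
  have c2: "?N * \<alpha> \<le> real_of_int \<lceil>?N * \<alpha>\<rceil>" by linarith
  have q1: "(real_of_int \<lceil>?N * \<alpha>\<rceil> - 1) / ?N < \<alpha>"
    using c1 N by (simp add: divide_less_eq algebra_simps)
  have q2: "\<alpha> - inverse ?N \<le> (real_of_int \<lceil>?N * \<alpha>\<rceil> - 1) / ?N"
    using c2 N by (simp add: le_divide_eq algebra_simps inverse_eq_divide diff_divide_distrib)
  show "bn n \<alpha> < \<alpha>" using q1 assms by (auto simp: bn_def)
  show "0 \<le> bn n \<alpha>" by (auto simp: bn_def)
  have "0 < inverse ?N" by simp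
  then have h: "\<alpha> - inverse ?N \<le> 1" using assms(2) by linarith
  show "\<alpha> - inverse ?N \<le> bn n \<alpha>" unfolding bn_def using q2 h
    by (auto simp only: min_def max_def split: if_split; linarith)
qed

lemma bn_in01: "\<alpha> \<in> {0..1} \<Longrightarrow> bn n \<alpha> \<in> {0..1}"
  by (auto simp: bn_def)

lemma bn_tendsto:
  assumes "0 < \<alpha>" "\<alpha> \<le> 1"
  shows "filterlim (\<lambda>n. bn n \<alpha>) (at_left \<alpha>) sequentially"
proof -
  have "(\<lambda>n. bn n \<alpha>) \<longlonglongrightarrow> \<alpha>"
  proof (rule tendsto_sandwich[where f="\<lambda>n. \<alpha> + - inverse (real (Suc n))" and h="\<lambda>n. \<alpha>"])
    show "\<forall>\<^sub>F n in sequentially. \<alpha> + - inverse (real (Suc n)) \<le> bn n \<alpha>"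
      using bn_props(3)[OF assms] by auto
    show "\<forall>\<^sub>F n in sequentially. bn n \<alpha> \<le> \<alpha>"
      by (intro always_eventually allI less_imp_le bn_props(1)[OF assms])
  qed (use LIMSEQ_inverse_real_of_nat_add_minus[of \<alpha>] in simp_all)
  moreover have "\<forall>n. bn n \<alpha> \<noteq> \<alpha> \<and> bn n \<alpha> \<in> {..<\<alpha>}" using bn_props(1)[OF assms] by (metis less_irrefl lessThan_iff)
  ultimately show ?thesis
    unfolding filterlim_at by (auto intro: always_eventually)
qed

lemma seq_conv:
  assumes an: "anti01 f" and lc: "\<And>\<alpha>. \<alpha> \<in> {0<..1} \<Longrightarrow> LC f \<alpha>" and a: "\<alpha> \<in> {0..1}"
  shows "(\<lambda>n. f (bn n \<alpha>)) \<longlonglongrightarrow> f \<alpha>"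
proof (cases "\<alpha> = 0")
  case True then show ?thesis by (simp add: bn_zero)
next
  case False
  then have a': "0 < \<alpha>" "\<alpha> \<le> 1" using a by auto
  show ?thesis
    using filterlim_compose[OF LC_tendsto[OF an lc[of \<alpha>] a'] bn_tendsto[OF a']] a' by auto
qed

lemma joint_meas:
  fixes F :: "real \<Rightarrow> 'w \<Rightarrow> real"
  assumes m: "\<And>\<alpha>. \<alpha> \<in> {0..1} \<Longrightarrow> F \<alpha> \<in> borel_measurable M"
    and an: "\<And>\<omega>. \<omega> \<in> space M \<Longrightarrow> anti01 (\<lambda>\<alpha>. F \<alpha> \<omega>)"
    and lc: "\<And>\<omega> \<alpha>. \<omega> \<in> space M \<Longrightarrow> \<alpha> \<in> {0<..1} \<Longrightarrow> LC (\<lambda>\<alpha>. F \<alpha> \<omega>) \<alpha>"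
  shows "(\<lambda>z. indicator {0..1} (snd z) * F (snd z) (fst z)) \<in> borel_measurable (M \<Otimes>\<^sub>M lborel)"
proof (rule borel_measurable_LIMSEQ_real)
  let ?u = "\<lambda>n z. indicator {0..1::real} (snd z) * F (bn n (snd z)) (fst z)"
  show "(\<lambda>n. ?u n z) \<longlonglongrightarrow> indicator {0..1} (snd z) * F (snd z) (fst z)"
    if z: "z \<in> space (M \<Otimes>\<^sub>M lborel)" for z
  proof (cases "snd z \<in> {0..1}")
    case True
    have "fst z \<in> space M" using z by (auto simp: space_pair_measure)
    then show ?thesis using True seq_conv[of "\<lambda>\<alpha>. F \<alpha> (fst z)" "snd z"] an lc
      by simp
  qed simp
  fix n
  define G where "G = (\<lambda>k::int. \<lambda>z. indicator {0..1::real} (snd z) *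
     F (min 1 (max 0 ((real_of_int k - 1) / real (Suc n)))) (fst z))"
  have "(\<lambda>z. G (\<lceil>real (Suc n) * snd z\<rceil>) z) \<in> borel_measurable (M \<Otimes>\<^sub>M lborel)"
  proof (rule measurable_compose_countable'[where f=G and g="\<lambda>z. \<lceil>real (Suc n) * snd z\<rceil>" and I=UNIV])
    fix k :: int assume "k \<in> UNIV"
    have "(\<lambda>z. F (min 1 (max 0 ((real_of_int k - 1) / real (Suc n)))) (fst z)) \<in> borel_measurable (M \<Otimes>\<^sub>M lborel)"
      by (rule measurable_compose[OF measurable_fst m]) auto
    then show "G k \<in> borel_measurable (M \<Otimes>\<^sub>M lborel)"
      unfolding G_def by measurable
  next
    show "(\<lambda>z. \<lceil>real (Suc n) * snd z\<rceil>) \<in> measurable (M \<Otimes>\<^sub>M lborel) (count_space UNIV)"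
      by measurable
  qed auto
  then show "?u n \<in> borel_measurable (M \<Otimes>\<^sub>M lborel)"
    by (simp add: G_def bn_def)
qed



lemma sf_anti: "B \<in> Fc \<Longrightarrow> anti01 (supp_fun B u)"
  unfolding anti01_def using sf_mono by blast

lemma sf_LC': "B \<in> Fc \<Longrightarrow> u \<in> {-1,1} \<Longrightarrow> \<alpha> \<in> {0<..1} \<Longrightarrow> LC (supp_fun B u) \<alpha>"
  unfolding LC_def using sf_LC by auto

lemma meas1:
  assumes "anti01 f" "\<And>\<alpha>. \<alpha> \<in> {0<..1} \<Longrightarrow> LC f \<alpha>"
  shows "(\<lambda>\<alpha>. indicator {0..1} \<alpha> * f \<alpha>) \<in> borel_measurable lborel"
proof -
  have "(\<lambda>z. indicator {0..1} (snd z) * (\<lambda>\<alpha> (\<omega>::unit). f \<alpha>) (snd z) (fst z))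
      \<in> borel_measurable (count_space UNIV \<Otimes>\<^sub>M lborel)"
    by (rule joint_meas) (use assms in auto)
  from measurable_Pair2[OF this, of "()"] show ?thesis by simp
qed

lemma Y_meas:
  assumes frv: "fuzzy_rv M X" and a: "\<alpha> \<in> {0..1}"
  shows "(\<lambda>\<omega>. supp_fun (X \<omega>) u \<alpha>) \<in> borel_measurable M"
  unfolding borel_measurable_iff_less
proof
  fix c :: real
  define K where "K = (\<lambda>n::nat. {v. c \<le> u * v} \<inter> {- real n .. real n})"
  have Kc: "compact (K n)" for n
    unfolding K_def
    by (intro closed_Int_compact closed_Collect_le) (auto intro!: continuous_intros)
  have rcs: "random_compact_set M (\<lambda>\<omega>. lev (X \<omega>) \<alpha>)" using frv a by (auto simp: fuzzy_rv_def)
  have S: "{\<omega> \<in> space M. lev (X \<omega>) \<alpha> \<inter> K n \<noteq> {}} \<in> sets M" for n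
    using rcs Kc unfolding random_compact_set_def by auto
  have "{\<omega> \<in> space M. supp_fun (X \<omega>) u \<alpha> < c} =
      space M - (\<Union>n. {\<omega> \<in> space M. lev (X \<omega>) \<alpha> \<inter> K n \<noteq> {}})"
  proof (intro set_eqI iffI)
    fix \<omega> assume "\<omega> \<in> {\<omega> \<in> space M. supp_fun (X \<omega>) u \<alpha> < c}"
    then have w: "\<omega> \<in> space M" "supp_fun (X \<omega>) u \<alpha> < c" by auto
    have B: "X \<omega> \<in> Fc" using frv w by (auto simp: fuzzy_rv_def)
    have "lev (X \<omega>) \<alpha> \<inter> K n = {}" for n
    proof (rule ccontr)
      assume "lev (X \<omega>) \<alpha> \<inter> K n \<noteq> {}"
      then obtain v where "v \<in> lev (X \<omega>) \<alpha>" "c \<le> u * v" by (auto simp: K_def)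
      then show False using sf_attained(2)[OF B a, of v u] w by auto
    qed
    then show "\<omega> \<in> space M - (\<Union>n. {\<omega> \<in> space M. lev (X \<omega>) \<alpha> \<inter> K n \<noteq> {}})" using w by auto
  next
    fix \<omega> assume "\<omega> \<in> space M - (\<Union>n. {\<omega> \<in> space M. lev (X \<omega>) \<alpha> \<inter> K n \<noteq> {}})"
    then have w: "\<omega> \<in> space M" and e: "\<And>n. lev (X \<omega>) \<alpha> \<inter> K n = {}" by auto
    have B: "X \<omega> \<in> Fc" using frv w by (auto simp: fuzzy_rv_def)
    obtain v where v: "v \<in> lev (X \<omega>) \<alpha>" "supp_fun (X \<omega>) u \<alpha> = u * v"
      using sf_attained(1)[OF B a] by auto
    obtain n :: nat where n: "\<bar>v\<bar> \<le> real n" using real_arch_simple by blast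
    have "\<not> c \<le> u * v"
    proof
      assume "c \<le> u * v"
      then have "v \<in> lev (X \<omega>) \<alpha> \<inter> K n" using v n by (auto simp: K_def)
      then show False using e by auto
    qed
    then show "\<omega> \<in> {\<omega> \<in> space M. supp_fun (X \<omega>) u \<alpha> < c}" using w v by auto
  qed
  also have "\<dots> \<in> sets M" using S by auto
  finally show "{\<omega> \<in> space M. supp_fun (X \<omega>) u \<alpha> < c} \<in> sets M" .
qed

lemma ind_abs: "indicator S x * \<bar>a - b\<bar> = \<bar>indicator S x * a - indicator S x * (b::real)\<bar>"
  by (auto split: split_indicator)

lemma integrand_meas:
  assumes frv: "fuzzy_rv M X" and B: "B \<in> Fc" and u: "u \<in> {-1,1}"
  shows "(\<lambda>z. ennreal (indicator {0..1} (snd z) * \<bar>supp_fun B u (snd z) - supp_fun (X (fst z)) u (snd z)\<bar>))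
     \<in> borel_measurable (M \<Otimes>\<^sub>M lborel)"
proof -
  have XF: "\<And>\<omega>. \<omega> \<in> space M \<Longrightarrow> X \<omega> \<in> Fc" using frv by (auto simp: fuzzy_rv_def)
  have m1: "(\<lambda>z. indicator {0..1} (snd z) * (\<lambda>\<alpha> (\<omega>::'a). supp_fun B u \<alpha>) (snd z) (fst z))
      \<in> borel_measurable (M \<Otimes>\<^sub>M lborel)"
    by (rule joint_meas) (use sf_anti[OF B] sf_LC'[OF B u] in auto)
  have m2: "(\<lambda>z. indicator {0..1} (snd z) * (\<lambda>\<alpha> \<omega>. supp_fun (X \<omega>) u \<alpha>) (snd z) (fst z))
      \<in> borel_measurable (M \<Otimes>\<^sub>M lborel)"
    by (rule joint_meas) (use Y_meas[OF frv] sf_anti XF sf_LC' u in auto)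
  show ?thesis unfolding ind_abs using m1 m2 by simp
qed

lemma sf_diff_integrable:
  assumes B: "B \<in> Fc" and C: "C \<in> Fc" and u: "u \<in> {-1,1}"
  shows "integrable lborel (\<lambda>\<alpha>. indicator {0..1} \<alpha> *\<^sub>R \<bar>supp_fun B u \<alpha> - supp_fun C u \<alpha>\<bar>)"
proof -
  have m: "(\<lambda>\<alpha>. indicator {0..1} \<alpha> * supp_fun D u \<alpha>) \<in> borel_measurable lborel" if "D \<in> Fc" for D
    by (rule meas1) (use sf_anti[OF that] sf_LC'[OF that u] in auto)
  have g: "(\<lambda>\<alpha>. indicator {0..1} \<alpha> * \<bar>supp_fun B u \<alpha> - supp_fun C u \<alpha>\<bar>) \<in> borel_measurable lborel"
    unfolding ind_abs using m[OF B] m[OF C] by simp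
  have "integrable lborel (\<lambda>\<alpha>. indicator {0..1} \<alpha> *\<^sub>R (indicator {0..1} \<alpha> * \<bar>supp_fun B u \<alpha> - supp_fun C u \<alpha>\<bar>))"
  proof (rule integrableI_bounded_set_indicator[where B="norm0 B + norm0 C"])
    show "AE x in lborel. x \<in> {0..1} \<longrightarrow> norm (indicator {0..1} x * \<bar>supp_fun B u x - supp_fun C u x\<bar>) \<le> norm0 B + norm0 C"
    proof (rule AE_I2, rule impI)
      fix x :: real assume x: "x \<in> {0..1}"
      show "norm (indicator {0..1} x * \<bar>supp_fun B u x - supp_fun C u x\<bar>) \<le> norm0 B + norm0 C"
        using sf_bound[OF B u x] sf_bound[OF C u x] x by auto
    qed
  qed (use g in auto)
  moreover have "(\<lambda>\<alpha>. indicator {0..1} \<alpha> *\<^sub>R (indicator {0..1} \<alpha> * \<bar>supp_fun B u \<alpha> - supp_fun C u \<alpha>\<bar>))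
     = (\<lambda>\<alpha>. indicator {0..1} \<alpha> *\<^sub>R \<bar>supp_fun B u \<alpha> - supp_fun C u \<alpha>\<bar>)"
    by (auto simp: fun_eq_iff split: split_indicator)
  ultimately show ?thesis by simp
qed



lemma rho1_expand:
  assumes B: "B \<in> Fc" and C: "C \<in> Fc"
  shows "ennreal (rho1 B C) = (\<Sum>u\<in>{-1,1}. ennreal (1/2) *
     (\<integral>\<^sup>+\<alpha>. ennreal (indicator {0..1} \<alpha> * \<bar>supp_fun B u \<alpha> - supp_fun C u \<alpha>\<bar>) \<partial>lborel))"
proof -
  have I: "(\<integral>\<^sup>+\<alpha>. ennreal (indicator {0..1} \<alpha> * \<bar>supp_fun B u \<alpha> - supp_fun C u \<alpha>\<bar>) \<partial>lborel)
      = ennreal (LBINT \<alpha>:{0..1}. \<bar>supp_fun B u \<alpha> - supp_fun C u \<alpha>\<bar>)"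
    and nn: "0 \<le> (LBINT \<alpha>:{0..1}. \<bar>supp_fun B u \<alpha> - supp_fun C u \<alpha>\<bar>)"
    if u: "u \<in> {-1,1}" for u
  proof -
    have "(\<integral>\<^sup>+\<alpha>. ennreal (indicator {0..1} \<alpha> *\<^sub>R \<bar>supp_fun B u \<alpha> - supp_fun C u \<alpha>\<bar>) \<partial>lborel)
      = ennreal (integral\<^sup>L lborel (\<lambda>\<alpha>. indicator {0..1} \<alpha> *\<^sub>R \<bar>supp_fun B u \<alpha> - supp_fun C u \<alpha>\<bar>))"
      by (rule nn_integral_eq_integral[OF sf_diff_integrable[OF B C u]]) (auto split: split_indicator)
    then show "(\<integral>\<^sup>+\<alpha>. ennreal (indicator {0..1} \<alpha> * \<bar>supp_fun B u \<alpha> - supp_fun C u \<alpha>\<bar>) \<partial>lborel)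
      = ennreal (LBINT \<alpha>:{0..1}. \<bar>supp_fun B u \<alpha> - supp_fun C u \<alpha>\<bar>)"
      by (simp add: set_lebesgue_integral_def)
    show "0 \<le> (LBINT \<alpha>:{0..1}. \<bar>supp_fun B u \<alpha> - supp_fun C u \<alpha>\<bar>)"
      unfolding set_lebesgue_integral_def by (intro integral_nonneg_AE AE_I2) (auto split: split_indicator)
  qed
  have "ennreal (rho1 B C) = (\<Sum>u\<in>{-1,1}. ennreal ((1/2) * (LBINT \<alpha>:{0..1}. \<bar>supp_fun B u \<alpha> - supp_fun C u \<alpha>\<bar>)))"
    unfolding rho1_def by (rule sum_ennreal[symmetric]) (use nn in auto)
  also have "\<dots> = (\<Sum>u\<in>{-1,1}. ennreal (1/2) *
     (\<integral>\<^sup>+\<alpha>. ennreal (indicator {0..1} \<alpha> * \<bar>supp_fun B u \<alpha> - supp_fun C u \<alpha>\<bar>) \<partial>lborel))"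
  proof (rule sum.cong)
    fix u :: real assume u: "u \<in> {-1,1}"
    have "ennreal ((1/2) * (LBINT \<alpha>:{0..1}. \<bar>supp_fun B u \<alpha> - supp_fun C u \<alpha>\<bar>))
      = ennreal (1/2) * ennreal (LBINT \<alpha>:{0..1}. \<bar>supp_fun B u \<alpha> - supp_fun C u \<alpha>\<bar>)"
      by (rule ennreal_mult) (use nn[OF u] in auto)
    then show "ennreal ((1/2) * (LBINT \<alpha>:{0..1}. \<bar>supp_fun B u \<alpha> - supp_fun C u \<alpha>\<bar>)) = ennreal (1/2) *
     (\<integral>\<^sup>+\<alpha>. ennreal (indicator {0..1} \<alpha> * \<bar>supp_fun B u \<alpha> - supp_fun C u \<alpha>\<bar>) \<partial>lborel)"
      by (simp only: I[OF u])
  qed simp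
  finally show ?thesis .
qed

lemma E_formula:
  assumes P: "prob_space M" and frv: "fuzzy_rv M X" and B: "B \<in> Fc"
  shows "(\<integral>\<^sup>+\<omega>. ennreal (rho1 B (X \<omega>)) \<partial>M) = (\<Sum>u\<in>{-1,1}. ennreal (1/2) *
     (\<integral>\<^sup>+\<alpha>. (\<integral>\<^sup>+\<omega>. ennreal (indicator {0..1} \<alpha> * \<bar>supp_fun B u \<alpha> - supp_fun (X \<omega>) u \<alpha>\<bar>) \<partial>M) \<partial>lborel))"
proof -
  interpret pair_sigma_finite M lborel
    by (intro pair_sigma_finite.intro prob_space_imp_sigma_finite[OF P] lborel.sigma_finite_measure_axioms)
  have XF: "\<And>\<omega>. \<omega> \<in> space M \<Longrightarrow> X \<omega> \<in> Fc" using frv by (auto simp: fuzzy_rv_def)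
  have mi: "case_prod (\<lambda>\<omega> \<alpha>. ennreal (indicator {0..1} \<alpha> * \<bar>supp_fun B u \<alpha> - supp_fun (X \<omega>) u \<alpha>\<bar>))
     \<in> borel_measurable (M \<Otimes>\<^sub>M lborel)" if u: "u \<in> {-1,1}" for u
    using integrand_meas[OF frv B u] by (simp add: split_beta')
  have "(\<integral>\<^sup>+\<omega>. ennreal (rho1 B (X \<omega>)) \<partial>M) = (\<integral>\<^sup>+\<omega>. (\<Sum>u\<in>{-1,1}. ennreal (1/2) *
     (\<integral>\<^sup>+\<alpha>. ennreal (indicator {0..1} \<alpha> * \<bar>supp_fun B u \<alpha> - supp_fun (X \<omega>) u \<alpha>\<bar>) \<partial>lborel)) \<partial>M)"
    by (rule nn_integral_cong) (simp add: rho1_expand[OF B XF])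
  also have "\<dots> = (\<Sum>u\<in>{-1,1}. (\<integral>\<^sup>+\<omega>. ennreal (1/2) *
     (\<integral>\<^sup>+\<alpha>. ennreal (indicator {0..1} \<alpha> * \<bar>supp_fun B u \<alpha> - supp_fun (X \<omega>) u \<alpha>\<bar>) \<partial>lborel) \<partial>M))"
    by (rule nn_integral_sum) (use mi in \<open>auto intro!: borel_measurable_times_ennreal lborel.borel_measurable_nn_integral\<close>)
  also have "\<dots> = (\<Sum>u\<in>{-1,1}. ennreal (1/2) * (\<integral>\<^sup>+\<omega>.
     (\<integral>\<^sup>+\<alpha>. ennreal (indicator {0..1} \<alpha> * \<bar>supp_fun B u \<alpha> - supp_fun (X \<omega>) u \<alpha>\<bar>) \<partial>lborel) \<partial>M))"
    by (rule sum.cong) (use mi in \<open>auto intro!: nn_integral_cmult lborel.borel_measurable_nn_integral\<close>)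
  also have "\<dots> = (\<Sum>u\<in>{-1,1}. ennreal (1/2) *
     (\<integral>\<^sup>+\<alpha>. (\<integral>\<^sup>+\<omega>. ennreal (indicator {0..1} \<alpha> * \<bar>supp_fun B u \<alpha> - supp_fun (X \<omega>) u \<alpha>\<bar>) \<partial>M) \<partial>lborel))"
    by (rule sum.cong) (use Fubini'[OF mi] in auto)
  finally show ?thesis .
qed



locale fzr = prob_space M for M :: "'w measure" +
  fixes X :: "'w \<Rightarrow> fuzzy"
  assumes frv: "fuzzy_rv M X"
    and fin: "(\<integral>\<^sup>+\<omega>. ennreal (norm0 (X \<omega>)) \<partial>M) < \<infinity>"
begin

definition "Y u \<alpha> \<omega> = supp_fun (X \<omega>) u \<alpha>"
definition "G u \<alpha> t = (\<integral>\<omega>. \<bar>t - Y u \<alpha> \<omega>\<bar> \<partial>M)"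
definition "Pl u \<alpha> t = prob {\<omega> \<in> space M. Y u \<alpha> \<omega> < t}"
definition "med u \<alpha> = Sup {t. Pl u \<alpha> t \<le> 1/2}"

lemma XF: "\<omega> \<in> space M \<Longrightarrow> X \<omega> \<in> Fc"
  using frv by (auto simp: fuzzy_rv_def)

lemma Ymeas[measurable]: "\<alpha> \<in> {0..1} \<Longrightarrow> Y u \<alpha> \<in> borel_measurable M"
  unfolding Y_def[abs_def] by (rule Y_meas[OF frv])

lemma Yint: assumes u: "u \<in> {-1,1}" and a: "\<alpha> \<in> {0..1}" shows "integrable M (Y u \<alpha>)"
proof (rule integrableI_bounded)
  show "Y u \<alpha> \<in> borel_measurable M" using a by simp
  have "(\<integral>\<^sup>+\<omega>. ennreal (norm (Y u \<alpha> \<omega>)) \<partial>M) \<le> (\<integral>\<^sup>+\<omega>. ennreal (norm0 (X \<omega>)) \<partial>M)"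
    by (rule nn_integral_mono) (use sf_bound[OF XF u a] in \<open>auto simp: Y_def intro!: ennreal_leI\<close>)
  then show "(\<integral>\<^sup>+\<omega>. ennreal (norm (Y u \<alpha> \<omega>)) \<partial>M) < \<infinity>" using fin by auto
qed

lemma Gint: "u \<in> {-1,1} \<Longrightarrow> \<alpha> \<in> {0..1} \<Longrightarrow> integrable M (\<lambda>\<omega>. \<bar>t - Y u \<alpha> \<omega>\<bar>)"
  using Yint by auto

lemma Gn_eq: assumes "u \<in> {-1,1}" "\<alpha> \<in> {0..1}"
  shows "(\<integral>\<^sup>+\<omega>. ennreal \<bar>t - Y u \<alpha> \<omega>\<bar> \<partial>M) = ennreal (G u \<alpha> t)"
  unfolding G_def by (rule nn_integral_eq_integral[OF Gint[OF assms]]) auto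

lemma G_between:
  assumes u: "u \<in> {-1,1}" and a: "\<alpha> \<in> {0..1}" and t: "min p q \<le> t" "t \<le> max p q"
  shows "G u \<alpha> t \<le> max (G u \<alpha> p) (G u \<alpha> q)"
proof -
  obtain l where l: "0 \<le> l" "l \<le> 1" "t = (1 - l) * p + l * q"
  proof (cases "p = q")
    case True then show ?thesis using that[of 0] t by auto
  next
    case False
    define l where "l = (t - p) / (q - p)"
    have "0 \<le> l" "l \<le> 1" using t False by (auto simp: l_def min_def max_def divide_simps split: if_splits)
    moreover have "t = (1 - l) * p + l * q"
    proof -
      have "q - p \<noteq> 0" using False by simp
      then have h: "l * (q - p) = t - p" by (simp add: l_def)
      have "(1 - l) * p + l * q = p + l * (q - p)" by (simp add: algebra_simps)
      then show ?thesis using h by linarith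
    qed
    ultimately show ?thesis using that by blast
  qed
  have pw: "\<bar>t - y\<bar> \<le> (1 - l) * \<bar>p - y\<bar> + l * \<bar>q - y\<bar>" for y
  proof -
    have "\<bar>t - y\<bar> = \<bar>(1 - l) * (p - y) + l * (q - y)\<bar>" using l by (simp add: algebra_simps)
    also have "\<dots> \<le> \<bar>(1 - l) * (p - y)\<bar> + \<bar>l * (q - y)\<bar>" by (rule abs_triangle_ineq)
    also have "\<dots> = (1 - l) * \<bar>p - y\<bar> + l * \<bar>q - y\<bar>" using l by (simp add: abs_mult)
    finally show ?thesis .
  qed
  have "G u \<alpha> t \<le> (\<integral>\<omega>. (1 - l) * \<bar>p - Y u \<alpha> \<omega>\<bar> + l * \<bar>q - Y u \<alpha> \<omega>\<bar> \<partial>M)"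
    unfolding G_def by (rule integral_mono) (use Gint[OF u a] pw in auto)
  also have "\<dots> = (1 - l) * G u \<alpha> p + l * G u \<alpha> q"
    unfolding G_def using Gint[OF u a] by simp
  also have "\<dots> \<le> (1 - l) * max (G u \<alpha> p) (G u \<alpha> q) + l * max (G u \<alpha> p) (G u \<alpha> q)"
    using l by (intro add_mono mult_left_mono) auto
  also have "\<dots> = max (G u \<alpha> p) (G u \<alpha> q)" by (simp add: algebra_simps)
  finally show ?thesis .
qed

lemma Pl_mono: "\<alpha> \<in> {0..1} \<Longrightarrow> s \<le> t \<Longrightarrow> Pl u \<alpha> s \<le> Pl u \<alpha> t"
  unfolding Pl_def by (rule finite_measure_mono) auto

lemma Pl_low: assumes "\<alpha> \<in> {0..1}" shows "\<exists>t. Pl u \<alpha> t \<le> 1/2"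
proof -
  let ?A = "\<lambda>n::nat. {\<omega> \<in> space M. Y u \<alpha> \<omega> < - real n}"
  have "(\<lambda>n. measure M (?A n)) \<longlonglongrightarrow> measure M (\<Inter>n. ?A n)"
    by (rule finite_Lim_measure_decseq) (use assms in \<open>auto simp: decseq_def\<close>)
  moreover have "(\<Inter>n. ?A n) = {}"
  proof safe
    fix \<omega> assume w: "\<omega> \<in> (\<Inter>n. ?A n)"
    obtain n :: nat where n: "- Y u \<alpha> \<omega> \<le> real n" using real_arch_simple by blast
    from w have "Y u \<alpha> \<omega> < - real n" by blast
    with n show "\<omega> \<in> {}" by linarith
  qed
  ultimately have "(\<lambda>n. measure M (?A n)) \<longlonglongrightarrow> 0" by simp
  from LIMSEQ_D[OF this, of "1/2"] obtain N where "\<forall>n\<ge>N. norm (measure M (?A n) - 0) < 1/2"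
    by auto
  then have "measure M (?A N) \<le> 1/2" by auto
  then show ?thesis unfolding Pl_def by blast
qed

lemma Pl_high: assumes "\<alpha> \<in> {0..1}" shows "\<exists>t. 1/2 < Pl u \<alpha> t"
proof -
  let ?A = "\<lambda>n::nat. {\<omega> \<in> space M. Y u \<alpha> \<omega> < real n}"
  have "(\<lambda>n. measure M (?A n)) \<longlonglongrightarrow> measure M (\<Union>n. ?A n)"
    by (rule Lim_measure_incseq) (use assms in \<open>auto simp: incseq_def\<close>)
  moreover have "(\<Union>n. ?A n) = space M"
  proof safe
    fix \<omega> assume "\<omega> \<in> space M"
    moreover obtain n :: nat where "Y u \<alpha> \<omega> < real n" using reals_Archimedean2 by blast
    ultimately show "\<omega> \<in> (\<Union>n. ?A n)" by auto
  qed
  ultimately have "(\<lambda>n. measure M (?A n)) \<longlonglongrightarrow> 1" by (simp add: prob_space)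
  from LIMSEQ_D[OF this, of "1/2"] obtain N where "\<forall>n\<ge>N. norm (measure M (?A n) - 1) < 1/2"
    by auto
  then have "1/2 < measure M (?A N)" by auto
  then show ?thesis unfolding Pl_def by blast
qed

lemma S_props:
  assumes "\<alpha> \<in> {0..1}"
  shows "{t. Pl u \<alpha> t \<le> 1/2} \<noteq> {}" "bdd_above {t. Pl u \<alpha> t \<le> 1/2}"
proof -
  show "{t. Pl u \<alpha> t \<le> 1/2} \<noteq> {}" using Pl_low[OF assms] by auto
  obtain T where T: "1/2 < Pl u \<alpha> T" using Pl_high[OF assms] by auto
  have "t \<le> T" if "Pl u \<alpha> t \<le> 1/2" for t
    using Pl_mono[OF assms, of T t u] that T by (cases "t \<le> T") auto
  then show "bdd_above {t. Pl u \<alpha> t \<le> 1/2}" by (intro bdd_aboveI[where M=T]) blast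
qed

lemma below_med: assumes "\<alpha> \<in> {0..1}" "t < med u \<alpha>" shows "Pl u \<alpha> t \<le> 1/2"
proof -
  obtain s where "Pl u \<alpha> s \<le> 1/2" "t < s"
    using less_cSupD[OF S_props(1)[OF assms(1)], of t] assms(2) by (auto simp: med_def)
  then show ?thesis using Pl_mono[OF assms(1), of t s u] by auto
qed

lemma above_med: assumes "\<alpha> \<in> {0..1}" "med u \<alpha> < t" shows "1/2 < Pl u \<alpha> t"
proof (rule ccontr)
  assume "\<not> 1/2 < Pl u \<alpha> t"
  then have "t \<le> med u \<alpha>" unfolding med_def by (intro cSup_upper S_props(2)[OF assms(1)]) auto
  then show False using assms by auto
qed

lemma med_lt: assumes a: "\<alpha> \<in> {0..1}" shows "prob {\<omega> \<in> space M. Y u \<alpha> \<omega> < med u \<alpha>} \<le> 1/2"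
proof -
  let ?m = "med u \<alpha>"
  let ?A = "\<lambda>n::nat. {\<omega> \<in> space M. Y u \<alpha> \<omega> < ?m - inverse (real (Suc n))}"
  have "(\<lambda>n. measure M (?A n)) \<longlonglongrightarrow> measure M (\<Union>n. ?A n)"
  proof (rule Lim_measure_incseq)
    show "incseq ?A" unfolding incseq_def
    proof (intro allI impI subsetI)
      fix m n :: nat and \<omega> assume "m \<le> n" "\<omega> \<in> ?A m"
      then have w: "\<omega> \<in> space M" "Y u \<alpha> \<omega> < ?m - inverse (real (Suc m))" by auto
      have "inverse (real (Suc n)) \<le> inverse (real (Suc m))" using \<open>m \<le> n\<close>
        by (simp add: le_imp_inverse_le)
      then have "Y u \<alpha> \<omega> < ?m - inverse (real (Suc n))" using w(2) by linarith
      then show "\<omega> \<in> ?A n" using w(1) by blast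
    qed
  qed (use a in auto)
  moreover have "(\<Union>n. ?A n) = {\<omega> \<in> space M. Y u \<alpha> \<omega> < ?m}"
  proof safe
    fix \<omega> assume w: "\<omega> \<in> space M" "Y u \<alpha> \<omega> < ?m"
    then obtain n where "inverse (real (Suc n)) < ?m - Y u \<alpha> \<omega>"
      using reals_Archimedean by (metis diff_gt_0_iff_gt)
    then have "Y u \<alpha> \<omega> < ?m - inverse (real (Suc n))" by linarith
    then show "\<omega> \<in> (\<Union>n. ?A n)" using w by blast
  next
    fix \<omega> n assume "Y u \<alpha> \<omega> < ?m - inverse (real (Suc n))"
    moreover have "0 < inverse (real (Suc n))" by simp
    ultimately show "Y u \<alpha> \<omega> < ?m" by linarith
  qed
  moreover have "measure M (?A n) \<le> 1/2" for n
    using below_med[OF a, of "?m - inverse (real (Suc n))" u] by (simp add: Pl_def)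
  ultimately show ?thesis using LIMSEQ_le_const2[of "\<lambda>n. measure M (?A n)" _ "1/2"] by auto
qed

lemma med_le: assumes a: "\<alpha> \<in> {0..1}" shows "1/2 \<le> prob {\<omega> \<in> space M. Y u \<alpha> \<omega> \<le> med u \<alpha>}"
proof -
  let ?m = "med u \<alpha>"
  let ?A = "\<lambda>n::nat. {\<omega> \<in> space M. Y u \<alpha> \<omega> < ?m + inverse (real (Suc n))}"
  have "(\<lambda>n. measure M (?A n)) \<longlonglongrightarrow> measure M (\<Inter>n. ?A n)"
  proof (rule finite_Lim_measure_decseq)
    show "decseq ?A" unfolding decseq_def
    proof (intro allI impI subsetI)
      fix m n :: nat and \<omega> assume "m \<le> n" "\<omega> \<in> ?A n"
      then have w: "\<omega> \<in> space M" "Y u \<alpha> \<omega> < ?m + inverse (real (Suc n))" by auto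
      have "inverse (real (Suc n)) \<le> inverse (real (Suc m))" using \<open>m \<le> n\<close>
        by (simp add: le_imp_inverse_le)
      then have "Y u \<alpha> \<omega> < ?m + inverse (real (Suc m))" using w(2) by linarith
      then show "\<omega> \<in> ?A m" using w(1) by blast
    qed
  qed (use a in auto)
  moreover have "(\<Inter>n. ?A n) = {\<omega> \<in> space M. Y u \<alpha> \<omega> \<le> ?m}"
  proof safe
    fix \<omega> assume w: "\<omega> \<in> (\<Inter>n. ?A n)"
    show "\<omega> \<in> space M" using w by auto
    show "Y u \<alpha> \<omega> \<le> ?m"
    proof (rule ccontr)
      assume "\<not> Y u \<alpha> \<omega> \<le> ?m"
      then obtain n where n: "inverse (real (Suc n)) < Y u \<alpha> \<omega> - ?m"
        using reals_Archimedean by (metis diff_gt_0_iff_gt not_le)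
      from w have "Y u \<alpha> \<omega> < ?m + inverse (real (Suc n))" by blast
      then show False using n by linarith
    qed
  next
    fix \<omega> n assume "Y u \<alpha> \<omega> \<le> ?m"
    moreover have "0 < inverse (real (Suc n))" by simp
    ultimately show "Y u \<alpha> \<omega> < ?m + inverse (real (Suc n))" by linarith
  qed
  moreover have "1/2 \<le> measure M (?A n)" for n
    using above_med[OF a, of u "?m + inverse (real (Suc n))"] by (simp add: Pl_def)
  ultimately show ?thesis using LIMSEQ_le_const[of "\<lambda>n. measure M (?A n)" _ "1/2"] by auto
qed

end


context fzr
begin

lemma G_min:
  assumes u: "u \<in> {-1,1}" and a: "\<alpha> \<in> {0..1}"
  shows "G u \<alpha> (med u \<alpha>) \<le> G u \<alpha> t"
proof -
  let ?m = "med u \<alpha>"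
  have Ym: "Y u \<alpha> \<in> borel_measurable M" using a by simp
  have dif: "G u \<alpha> t - G u \<alpha> ?m = (\<integral>\<omega>. \<bar>t - Y u \<alpha> \<omega>\<bar> - \<bar>?m - Y u \<alpha> \<omega>\<bar> \<partial>M)"
    unfolding G_def by (rule Bochner_Integration.integral_diff[symmetric]) (use Gint[OF u a] in auto)
  show ?thesis
  proof (cases "?m \<le> t")
    case True
    define S where "S = {\<omega> \<in> space M. Y u \<alpha> \<omega> \<le> ?m}"
    have S: "S \<in> sets M" unfolding S_def using Ym by measurable
    have iS: "integrable M (indicator S :: 'w \<Rightarrow> real)" using S by (rule integrable_real_indicator) (simp add: less_top[symmetric])
    have i2: "integrable M (\<lambda>\<omega>. 2 * indicator S \<omega> :: real)" by (rule integrable_mult_right) (rule iS)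
    have pS: "(\<integral>\<omega>. indicator S \<omega> \<partial>M) = prob S" using S sets.sets_into_space[OF S] by (simp add: Int_absorb2)
    have "(\<integral>\<omega>. (2 * indicator S \<omega> - 1::real) \<partial>M) = (\<integral>\<omega>. 2 * indicator S \<omega> \<partial>M) - (\<integral>\<omega>. 1 \<partial>M)"
      by (rule Bochner_Integration.integral_diff[OF i2 integrable_const])
    also have "\<dots> = 2 * prob S - 1" using pS by (simp add: prob_space)
    finally have e1: "(\<integral>\<omega>. (2 * indicator S \<omega> - 1) \<partial>M) = 2 * prob S - 1" .
    have "(\<integral>\<omega>. (t - ?m) * (2 * indicator S \<omega> - 1) \<partial>M) \<le> (\<integral>\<omega>. \<bar>t - Y u \<alpha> \<omega>\<bar> - \<bar>?m - Y u \<alpha> \<omega>\<bar> \<partial>M)"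
    proof (rule integral_mono)
      have i3: "integrable M (\<lambda>\<omega>. 2 * indicator S \<omega> - (1::real))" by (rule Bochner_Integration.integrable_diff[OF i2 integrable_const])
      show "integrable M (\<lambda>\<omega>. (t - ?m) * (2 * indicator S \<omega> - 1))" by (rule integrable_mult_right) (rule i3)
      show "integrable M (\<lambda>\<omega>. \<bar>t - Y u \<alpha> \<omega>\<bar> - \<bar>?m - Y u \<alpha> \<omega>\<bar>)"
        using Gint[OF u a] by auto
      fix \<omega> assume w: "\<omega> \<in> space M"
      show "(t - ?m) * (2 * indicator S \<omega> - 1) \<le> \<bar>t - Y u \<alpha> \<omega>\<bar> - \<bar>?m - Y u \<alpha> \<omega>\<bar>"
        using True w by (auto simp: S_def indicator_def)
    qed
    moreover have "(\<integral>\<omega>. (t - ?m) * (2 * indicator S \<omega> - 1) \<partial>M) = (t - ?m) * (2 * prob S - 1)"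
      using e1 by simp
    moreover have "1/2 \<le> prob S" using med_le[OF a] by (simp add: S_def)
    moreover have "0 \<le> (t - ?m) * (2 * prob S - 1)"
      by (rule mult_nonneg_nonneg) (use True \<open>1/2 \<le> prob S\<close> in auto)
    ultimately have "0 \<le> G u \<alpha> t - G u \<alpha> ?m" using dif by linarith
    then show ?thesis by simp
  next
    case False
    define S where "S = {\<omega> \<in> space M. Y u \<alpha> \<omega> < ?m}"
    have S: "S \<in> sets M" unfolding S_def using Ym by measurable
    have iS: "integrable M (indicator S :: 'w \<Rightarrow> real)" using S by (rule integrable_real_indicator) (simp add: less_top[symmetric])
    have i2: "integrable M (\<lambda>\<omega>. 2 * indicator S \<omega> :: real)" by (rule integrable_mult_right) (rule iS)
    have pS: "(\<integral>\<omega>. indicator S \<omega> \<partial>M) = prob S" using S sets.sets_into_space[OF S] by (simp add: Int_absorb2)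
    have "(\<integral>\<omega>. (1 - 2 * indicator S \<omega>::real) \<partial>M) = (\<integral>\<omega>. 1 \<partial>M) - (\<integral>\<omega>. 2 * indicator S \<omega> \<partial>M)"
      by (rule Bochner_Integration.integral_diff[OF integrable_const i2])
    also have "\<dots> = 1 - 2 * prob S" using pS by (simp add: prob_space)
    finally have e1: "(\<integral>\<omega>. (1 - 2 * indicator S \<omega>) \<partial>M) = 1 - 2 * prob S" .
    have "(\<integral>\<omega>. (?m - t) * (1 - 2 * indicator S \<omega>) \<partial>M) \<le> (\<integral>\<omega>. \<bar>t - Y u \<alpha> \<omega>\<bar> - \<bar>?m - Y u \<alpha> \<omega>\<bar> \<partial>M)"
    proof (rule integral_mono)
      have i3: "integrable M (\<lambda>\<omega>. (1::real) - 2 * indicator S \<omega>)" by (rule Bochner_Integration.integrable_diff[OF integrable_const i2])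
      show "integrable M (\<lambda>\<omega>. (?m - t) * (1 - 2 * indicator S \<omega>))" by (rule integrable_mult_right) (rule i3)
      show "integrable M (\<lambda>\<omega>. \<bar>t - Y u \<alpha> \<omega>\<bar> - \<bar>?m - Y u \<alpha> \<omega>\<bar>)"
        using Gint[OF u a] by auto
      fix \<omega> assume w: "\<omega> \<in> space M"
      show "(?m - t) * (1 - 2 * indicator S \<omega>) \<le> \<bar>t - Y u \<alpha> \<omega>\<bar> - \<bar>?m - Y u \<alpha> \<omega>\<bar>"
        using False w by (auto simp: S_def indicator_def)
    qed
    moreover have "(\<integral>\<omega>. (?m - t) * (1 - 2 * indicator S \<omega>) \<partial>M) = (?m - t) * (1 - 2 * prob S)"
      using e1 by simp
    moreover have "prob S \<le> 1/2" using med_lt[OF a] by (simp add: S_def)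
    moreover have "0 \<le> (?m - t) * (1 - 2 * prob S)"
      by (rule mult_nonneg_nonneg) (use False \<open>prob S \<le> 1/2\<close> in auto)
    ultimately have "0 \<le> G u \<alpha> t - G u \<alpha> ?m" using dif by linarith
    then show ?thesis by simp
  qed
qed

lemma Y_anti: "\<omega> \<in> space M \<Longrightarrow> anti01 (\<lambda>\<alpha>. Y u \<alpha> \<omega>)"
  unfolding Y_def using sf_anti[OF XF] by simp

lemma Y_mono: "\<omega> \<in> space M \<Longrightarrow> 0 \<le> \<alpha> \<Longrightarrow> \<alpha> \<le> \<beta> \<Longrightarrow> \<beta> \<le> 1 \<Longrightarrow> Y u \<beta> \<omega> \<le> Y u \<alpha> \<omega>"
  using Y_anti unfolding anti01_def by blast

lemma Y_LC: "\<omega> \<in> space M \<Longrightarrow> u \<in> {-1,1} \<Longrightarrow> \<alpha> \<in> {0<..1} \<Longrightarrow> LC (\<lambda>\<alpha>. Y u \<alpha> \<omega>) \<alpha>"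
  unfolding Y_def using sf_LC'[OF XF] by simp

lemma med_mono:
  assumes "0 \<le> \<alpha>" "\<alpha> \<le> \<beta>" "\<beta> \<le> 1"
  shows "med u \<beta> \<le> med u \<alpha>"
proof -
  have a: "\<alpha> \<in> {0..1}" and b: "\<beta> \<in> {0..1}" using assms by auto
  have "Pl u \<alpha> t \<le> Pl u \<beta> t" for t
    unfolding Pl_def
    by (rule finite_measure_mono) (use Y_mono[OF _ assms] b in \<open>auto intro: le_less_trans\<close>)
  then have "Pl u \<alpha> x \<le> 1/2" if "Pl u \<beta> x \<le> 1/2" for x using that by (meson order.trans)
  then have "{t. Pl u \<beta> t \<le> 1/2} \<subseteq> {t. Pl u \<alpha> t \<le> 1/2}" by blast
  then show ?thesis unfolding med_def
    by (rule cSup_subset_mono[OF S_props(1)[OF b] S_props(2)[OF a]])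
qed

lemma med_anti: "anti01 (med u)"
  unfolding anti01_def using med_mono by blast

lemma med_LC:
  assumes u: "u \<in> {-1,1}" and a: "0 < \<alpha>" "\<alpha> \<le> 1"
  shows "LC (med u) \<alpha>"
  unfolding LC_def
proof (intro allI impI)
  fix c assume H: "\<forall>\<beta>\<in>{0<..<\<alpha>}. c \<le> med u \<beta>"
  show "c \<le> med u \<alpha>"
  proof (rule ccontr)
    assume "\<not> c \<le> med u \<alpha>"
    define t where "t = (med u \<alpha> + c) / 2"
    have t1: "med u \<alpha> < t" and t2: "t < c" using \<open>\<not> c \<le> med u \<alpha>\<close> by (auto simp: t_def)
    have a01: "\<alpha> \<in> {0..1}" using a by auto
    have hi: "1/2 < Pl u \<alpha> t" using above_med[OF a01 t1] .
    define g where "g = (\<lambda>n::nat. \<alpha> * (1 - inverse (real (Suc (Suc n)))))"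
    have inv: "0 < inverse (real (Suc (Suc n)))" "inverse (real (Suc (Suc n))) < 1" for n
      by (auto simp: inverse_less_1_iff)
    have g0: "0 < g n" "g n < \<alpha>" for n
      using inv[of n] a by (auto simp: g_def)
    have gmono: "g m \<le> g n" if "m \<le> n" for m n
    proof -
      have "inverse (real (Suc (Suc n))) \<le> inverse (real (Suc (Suc m)))"
        using that by (simp add: le_imp_inverse_le)
      then show ?thesis using a unfolding g_def by (intro mult_left_mono) auto
    qed
    have gbig: "\<exists>n. \<beta> < g n" if "\<beta> < \<alpha>" for \<beta>
    proof -
      have pos: "0 < (\<alpha> - \<beta>) / \<alpha>" using that a by simp
      obtain n where n: "inverse (real (Suc n)) < (\<alpha> - \<beta>) / \<alpha>"
        using reals_Archimedean[OF pos] by blast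
      have i1: "\<alpha> * inverse (real (Suc (Suc n))) \<le> \<alpha> * inverse (real (Suc n))"
        by (intro mult_left_mono le_imp_inverse_le) (use a in auto)
      have i2: "\<alpha> * inverse (real (Suc n)) < \<alpha> - \<beta>"
        using n a by (simp add: less_divide_eq mult.commute)
      have "\<alpha> * inverse (real (Suc (Suc n))) < \<alpha> - \<beta>" using i1 i2 by linarith
      then show ?thesis by (auto simp: g_def algebra_simps)
    qed
    let ?A = "\<lambda>n. {\<omega> \<in> space M. Y u (g n) \<omega> < t}"
    have g01: "g n \<in> {0..1}" for n using g0[of n] a by auto
    have "(\<lambda>n. measure M (?A n)) \<longlonglongrightarrow> measure M (\<Union>n. ?A n)"
    proof (rule Lim_measure_incseq)
      show "range ?A \<subseteq> sets M" using g01 by auto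
      show "incseq ?A" unfolding incseq_def
      proof (intro allI impI subsetI)
        fix m n :: nat and \<omega> assume "m \<le> n" "\<omega> \<in> ?A m"
        then have w: "\<omega> \<in> space M" "Y u (g m) \<omega> < t" by auto
        have "Y u (g n) \<omega> \<le> Y u (g m) \<omega>"
          by (rule Y_mono) (use w gmono[of m n] g0[of m] g0[of n] a \<open>m \<le> n\<close> in auto)
        then show "\<omega> \<in> ?A n" using w by auto
      qed
    qed auto
    moreover have "(\<Union>n. ?A n) = {\<omega> \<in> space M. Y u \<alpha> \<omega> < t}"
    proof safe
      fix \<omega> n assume "\<omega> \<in> space M" "Y u (g n) \<omega> < t"
      then show "Y u \<alpha> \<omega> < t" using Y_mono[of \<omega> "g n" \<alpha> u] g0[of n] a by auto
    next
      fix \<omega> assume w: "\<omega> \<in> space M" "Y u \<alpha> \<omega> < t"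
      show "\<omega> \<in> (\<Union>n. ?A n)"
      proof (rule ccontr)
        assume "\<omega> \<notin> (\<Union>n. ?A n)"
        have ge: "t \<le> Y u (g n) \<omega>" for n
        proof -
          from \<open>\<omega> \<notin> (\<Union>n. ?A n)\<close> have "\<omega> \<notin> ?A n" by blast
          then show ?thesis using w(1) by auto
        qed
        have "t \<le> Y u \<beta> \<omega>" if b: "\<beta> \<in> {0<..<\<alpha>}" for \<beta>
        proof -
          obtain n where "\<beta> < g n" using gbig b by auto
          then show ?thesis using ge[of n] Y_mono[of \<omega> \<beta> "g n" u] g0[of n] b w a by auto
        qed
        then have "t \<le> Y u \<alpha> \<omega>" using Y_LC[OF w(1) u, of \<alpha>] a unfolding LC_def by auto
        then show False using w by auto
      qed
    qed
    moreover have "measure M (?A n) \<le> 1/2" for n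
    proof -
      have "t < med u (g n)" using H g0[of n] t2 by force
      then show ?thesis using below_med[OF g01[of n]] by (simp add: Pl_def)
    qed
    ultimately have "Pl u \<alpha> t \<le> 1/2"
      using LIMSEQ_le_const2[of "\<lambda>n. measure M (?A n)" _ "1/2"] by (auto simp: Pl_def)
    then show False using hi by auto
  qed
qed

lemma med_sum:
  assumes a: "\<alpha> \<in> {0..1}"
  shows "0 \<le> med 1 \<alpha> + med (-1) \<alpha>"
proof (rule ccontr)
  assume "\<not> 0 \<le> med 1 \<alpha> + med (-1) \<alpha>"
  define t where "t = (med 1 \<alpha> - med (-1) \<alpha>) / 2"
  have "med 1 \<alpha> < t" using \<open>\<not> _\<close> unfolding t_def by (simp add: field_simps)
  moreover have "med (-1) \<alpha> < - t" using \<open>\<not> _\<close> unfolding t_def by (simp add: field_simps)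
  ultimately have p1: "1/2 < Pl 1 \<alpha> t" and p2: "1/2 < Pl (-1) \<alpha> (-t)"
    using above_med[OF a] by auto
  let ?A = "{\<omega> \<in> space M. Y 1 \<alpha> \<omega> < t}" and ?B = "{\<omega> \<in> space M. Y (-1) \<alpha> \<omega> < -t}"
  have "?A \<inter> ?B = {}"
  proof safe
    fix \<omega> assume w: "\<omega> \<in> space M" "Y 1 \<alpha> \<omega> < t" "Y (-1) \<alpha> \<omega> < -t"
    have "0 \<le> Y 1 \<alpha> \<omega> + Y (-1) \<alpha> \<omega>" using sf_sum_nonneg[OF XF[OF w(1)] a] by (simp add: Y_def)
    then show "\<omega> \<in> {}" using w by linarith
  qed
  then have "prob (?A \<union> ?B) = prob ?A + prob ?B"
    using a by (intro finite_measure_Union) auto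
  moreover have "prob (?A \<union> ?B) \<le> 1" by (rule prob_le_1)
  ultimately show False using p1 p2 by (simp add: Pl_def)
qed

end


lemma construct:
  fixes p q :: "real \<Rightarrow> real"
  assumes ap: "anti01 p" and aq: "anti01 q"
    and pq: "\<And>\<alpha>. \<alpha> \<in> {0..1} \<Longrightarrow> 0 \<le> p \<alpha> + q \<alpha>"
    and lp: "\<And>\<alpha>. \<alpha> \<in> {0<..1} \<Longrightarrow> LC p \<alpha>"
    and lq: "\<And>\<alpha>. \<alpha> \<in> {0<..1} \<Longrightarrow> LC q \<alpha>"
  defines "B \<equiv> (\<lambda>x. Sup (insert 0 {\<alpha> \<in> {0<..1}. - q \<alpha> \<le> x \<and> x \<le> p \<alpha>}))"
  shows "B \<in> Fc" and "\<And>\<alpha>. \<alpha> \<in> {0<..1} \<Longrightarrow> supp_fun B 1 \<alpha> = p \<alpha> \<and> supp_fun B (-1) \<alpha> = q \<alpha>"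
proof -
  define S where "S = (\<lambda>x. {\<alpha> \<in> {0<..1}. - q \<alpha> \<le> x \<and> x \<le> p \<alpha>})"
  have Bx: "B x = Sup (insert 0 (S x))" for x by (simp add: B_def S_def)
  have bdd: "bdd_above (insert 0 (S x))" for x
    by (rule bdd_aboveI[where M=1]) (auto simp: S_def)
  have B01: "0 \<le> B x \<and> B x \<le> 1" for x
  proof
    show "0 \<le> B x" unfolding Bx by (rule cSup_upper[OF _ bdd]) simp
    show "B x \<le> 1" unfolding Bx by (rule cSup_least) (auto simp: S_def)
  qed
  have pm: "p y \<le> p x" "q y \<le> q x" if "0 \<le> x" "x \<le> y" "y \<le> 1" for x y
    using ap aq that unfolding anti01_def by auto
  have levB: "{x. \<alpha> \<le> B x} = {- q \<alpha> .. p \<alpha>}" if a: "\<alpha> \<in> {0<..1}" for \<alpha>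
  proof (intro set_eqI iffI)
    fix x assume "x \<in> {- q \<alpha> .. p \<alpha>}"
    then have "\<alpha> \<in> insert 0 (S x)" using a by (auto simp: S_def)
    then have "\<alpha> \<le> Sup (insert 0 (S x))" by (rule cSup_upper[OF _ bdd])
    then show "x \<in> {x. \<alpha> \<le> B x}" by (simp add: Bx)
  next
    fix x assume "x \<in> {x. \<alpha> \<le> B x}"
    then have ax: "\<alpha> \<le> B x" by simp
    have *: "- x \<le> q \<beta> \<and> x \<le> p \<beta>" if b: "\<beta> \<in> {0<..<\<alpha>}" for \<beta>
    proof -
      have "\<beta> < Sup (insert 0 (S x))" using ax b unfolding Bx by simp
      then obtain \<gamma> where g: "\<gamma> \<in> insert 0 (S x)" "\<beta> < \<gamma>" using less_cSupD[of "insert 0 (S x)" \<beta>] by blast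
      then have g': "\<gamma> \<in> S x" using b by auto
      then have "0 < \<gamma>" "\<gamma> \<le> 1" "- q \<gamma> \<le> x" "x \<le> p \<gamma>" by (auto simp: S_def)
      moreover have "0 \<le> \<beta>" "\<beta> \<le> \<gamma>" using b g(2) by auto
      then have "p \<gamma> \<le> p \<beta>" "q \<gamma> \<le> q \<beta>" using pm[of \<beta> \<gamma>] \<open>\<gamma> \<le> 1\<close> by auto
      ultimately show ?thesis by linarith
    qed
    have "- x \<le> q \<alpha>" using lq[OF a] * unfolding LC_def by (meson order.refl)
    moreover have "x \<le> p \<alpha>" using lp[OF a] * unfolding LC_def by (meson order.refl)
    ultimately show "x \<in> {- q \<alpha> .. p \<alpha>}" by auto
  qed
  have lev_pos: "lev B \<alpha> = {- q \<alpha> .. p \<alpha>}" if a: "\<alpha> \<in> {0<..1}" for \<alpha>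
    using levB[OF a] a by (simp add: lev_def)
  define U where "U = {x. 0 < B x}"
  have U_eq: "U = {x. \<exists>\<gamma>\<in>{0<..1}. - q \<gamma> \<le> x \<and> x \<le> p \<gamma>}"
  proof (intro set_eqI iffI)
    fix x assume "x \<in> U"
    then have "0 < Sup (insert 0 (S x))" unfolding Bx[symmetric] by (simp add: U_def)
    then obtain \<gamma> where "\<gamma> \<in> insert 0 (S x)" "0 < \<gamma>" using less_cSupD[of "insert 0 (S x)" 0] by blast
    then show "x \<in> {x. \<exists>\<gamma>\<in>{0<..1}. - q \<gamma> \<le> x \<and> x \<le> p \<gamma>}" by (auto simp: S_def)
  next
    fix x assume "x \<in> {x. \<exists>\<gamma>\<in>{0<..1}. - q \<gamma> \<le> x \<and> x \<le> p \<gamma>}"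
    then obtain \<gamma> where g: "\<gamma> \<in> {0<..1}" "- q \<gamma> \<le> x" "x \<le> p \<gamma>" by auto
    then have "x \<in> {- q \<gamma> .. p \<gamma>}" by simp
    then have "x \<in> {x. \<gamma> \<le> B x}" by (simp only: levB[OF g(1)])
    then have "\<gamma> \<le> B x" by simp
    then show "x \<in> U" using g by (auto simp: U_def)
  qed
  have U_sub: "U \<subseteq> {- q 0 .. p 0}"
  proof
    fix x assume "x \<in> U"
    then obtain \<gamma> where g: "\<gamma> \<in> {0<..1}" "- q \<gamma> \<le> x" "x \<le> p \<gamma>" using U_eq by auto
    then have "p \<gamma> \<le> p 0" "q \<gamma> \<le> q 0" using pm[of 0 \<gamma>] by auto
    then show "x \<in> {- q 0 .. p 0}" using g by simp
  qed
  have "- q 1 \<le> p 1" using pq[of 1] by simp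
  then have U_ne: "p 1 \<in> U" unfolding U_eq by force
  have U_int: "is_interval U" unfolding is_interval_1
  proof (intro ballI allI impI)
    fix a b x assume ab: "a \<in> U" "b \<in> U" and x: "a \<le> x \<and> x \<le> b"
    have "a \<in> {x. \<exists>\<gamma>\<in>{0<..1}. - q \<gamma> \<le> x \<and> x \<le> p \<gamma>}" using ab(1) unfolding U_eq .
    then obtain g1 where g1: "g1 \<in> {0<..1}" "- q g1 \<le> a" "a \<le> p g1" by blast
    have "b \<in> {x. \<exists>\<gamma>\<in>{0<..1}. - q \<gamma> \<le> x \<and> x \<le> p \<gamma>}" using ab(2) unfolding U_eq .
    then obtain g2 where g2: "g2 \<in> {0<..1}" "- q g2 \<le> b" "b \<le> p g2" by blast
    define g where "g = min g1 g2"
    have "g \<in> {0<..1}" using g1 g2 by (auto simp: g_def)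
    moreover have "q g1 \<le> q g" using pm[of g g1] g1 g2 by (auto simp: g_def)
    then have "- q g \<le> x" using g1 x by linarith
    moreover have "p g2 \<le> p g" using pm[of g g2] g1 g2 by (auto simp: g_def)
    then have "x \<le> p g" using g2 x by linarith
    ultimately have "x \<in> {x. \<exists>\<gamma>\<in>{0<..1}. - q \<gamma> \<le> x \<and> x \<le> p \<gamma>}" by blast
    then show "x \<in> U" unfolding U_eq .
  qed
  have lev0: "lev B 0 = closure U" by (simp add: lev_def U_def)
  have "lev B 0 \<noteq> {}" using U_ne closure_subset unfolding lev0 by blast
  moreover have "compact (lev B 0)" unfolding lev0 compact_closure
    using U_sub bounded_subset[OF compact_imp_bounded[OF compact_Icc]] by blast
  moreover have "is_interval (lev B 0)" unfolding lev0 is_interval_convex_1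
    using U_int convex_closure is_interval_convex_1 by blast
  ultimately have l0: "lev B 0 \<noteq> {} \<and> compact (lev B 0) \<and> is_interval (lev B 0)" by blast
  show "B \<in> Fc" unfolding Fc_def
  proof (rule CollectI, rule conjI)
    show "\<forall>x. 0 \<le> B x \<and> B x \<le> 1" using B01 by blast
  next
    show "\<forall>\<alpha>\<in>{0..1}. lev B \<alpha> \<noteq> {} \<and> compact (lev B \<alpha>) \<and> is_interval (lev B \<alpha>)"
    proof
    fix \<alpha> :: real assume a: "\<alpha> \<in> {0..1}"
    show "lev B \<alpha> \<noteq> {} \<and> compact (lev B \<alpha>) \<and> is_interval (lev B \<alpha>)"
    proof (cases "\<alpha> = 0")
      case True then show ?thesis using l0 by simp
    next
      case False
      then have a': "\<alpha> \<in> {0<..1}" using a by auto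
      show ?thesis unfolding lev_pos[OF a'] using pq[OF a] by (auto simp: is_interval_cc)
    qed
    qed
  qed
  fix \<alpha> :: real assume a: "\<alpha> \<in> {0<..1}"
  have le: "- q \<alpha> \<le> p \<alpha>" using pq[of \<alpha>] a by auto
  have "supp_fun B 1 \<alpha> = p \<alpha>" unfolding supp_fun_def lev_pos[OF a] using le by simp
  moreover have "(\<lambda>v. - 1 * v) ` {- q \<alpha> .. p \<alpha>} = {- p \<alpha> .. q \<alpha>}" by simp
  then have "supp_fun B (-1) \<alpha> = q \<alpha>" unfolding supp_fun_def lev_pos[OF a] using le by simp
  ultimately show "supp_fun B 1 \<alpha> = p \<alpha> \<and> supp_fun B (-1) \<alpha> = q \<alpha>" by simp
qed



lemma rho1_I:
  "rho1 B C = (1/2) * integral\<^sup>L lborel (\<lambda>\<alpha>. indicator {0..1} \<alpha> *\<^sub>R \<bar>supp_fun B (-1) \<alpha> - supp_fun C (-1) \<alpha>\<bar>)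
     + (1/2) * integral\<^sup>L lborel (\<lambda>\<alpha>. indicator {0..1} \<alpha> *\<^sub>R \<bar>supp_fun B 1 \<alpha> - supp_fun C 1 \<alpha>\<bar>)"
  unfolding rho1_def set_lebesgue_integral_def by simp

lemma between_AE:
  assumes A: "A \<in> Fc" and U: "U \<in> Fc" and V: "V \<in> Fc"
    and eq: "rho1 A V = rho1 A U + rho1 U V" and u: "u \<in> {-1,1}"
  shows "AE \<alpha> in lborel. \<alpha> \<in> {0..1} \<longrightarrow>
     \<bar>supp_fun A u \<alpha> - supp_fun V u \<alpha>\<bar> = \<bar>supp_fun A u \<alpha> - supp_fun U u \<alpha>\<bar> + \<bar>supp_fun U u \<alpha> - supp_fun V u \<alpha>\<bar>"
proof -
  define f where "f = (\<lambda>B C u \<alpha>. indicator {0..1} \<alpha> *\<^sub>R \<bar>supp_fun B u \<alpha> - supp_fun C u \<alpha>\<bar>)"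
  define d where "d = (\<lambda>u \<alpha>. f A U u \<alpha> + f U V u \<alpha> - f A V u \<alpha>)"
  have fi: "integrable lborel (f B C u)" if "B \<in> Fc" "C \<in> Fc" "u \<in> {-1,1}" for B C u
    unfolding f_def by (rule sf_diff_integrable[OF that])
  have di: "integrable lborel (d u)" if "u \<in> {-1,1}" for u
    unfolding d_def using fi[OF A U that] fi[OF U V that] fi[OF A V that] by auto
  have dint: "integral\<^sup>L lborel (d u) = integral\<^sup>L lborel (f A U u) + integral\<^sup>L lborel (f U V u) - integral\<^sup>L lborel (f A V u)"
    if "u \<in> {-1,1}" for u
    unfolding d_def using fi[OF A U that] fi[OF U V that] fi[OF A V that] by simp
  have dnn: "0 \<le> d u \<alpha>" for u \<alpha>
    unfolding d_def f_def by (auto split: split_indicator)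
  have Dnn: "0 \<le> integral\<^sup>L lborel (d u)" for u
    by (rule integral_nonneg_AE) (use dnn in auto)
  have "integral\<^sup>L lborel (d (-1)) + integral\<^sup>L lborel (d 1) = 0"
    using eq unfolding rho1_I dint[of "-1", simplified] dint[of 1, simplified] f_def by simp
  then have "integral\<^sup>L lborel (d u) = 0" using Dnn[of "-1"] Dnn[of 1] u by auto
  then have "AE \<alpha> in lborel. d u \<alpha> = 0"
    using integral_nonneg_eq_0_iff_AE[OF di[OF u]] dnn by auto
  then show ?thesis
    by (rule AE_mp) (auto simp: d_def f_def intro!: AE_I2)
qed

lemma between_real:
  fixes a u v :: real
  assumes "\<bar>a - v\<bar> = \<bar>a - u\<bar> + \<bar>u - v\<bar>"
  shows "min a v \<le> u" "u \<le> max a v"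
  using assms by (auto simp: min_def max_def abs_if split: if_splits)

context fzr
begin

definition "K B u \<alpha> = (\<integral>\<^sup>+\<omega>. ennreal (indicator {0..1} \<alpha> * \<bar>supp_fun B u \<alpha> - Y u \<alpha> \<omega>\<bar>) \<partial>M)"
definition "eB B = (\<integral>\<^sup>+\<omega>. ennreal (rho1 B (X \<omega>)) \<partial>M)"

lemma eB_K: "B \<in> Fc \<Longrightarrow> eB B = (\<Sum>u\<in>{-1,1}. ennreal (1/2) * (\<integral>\<^sup>+\<alpha>. K B u \<alpha> \<partial>lborel))"
  unfolding eB_def K_def Y_def by (rule E_formula[OF prob_space_axioms frv])

lemma K_meas: assumes "B \<in> Fc" "u \<in> {-1,1}" shows "K B u \<in> borel_measurable lborel"
proof -
  have "(\<lambda>z. ennreal (indicator {0..1} (snd z) * \<bar>supp_fun B u (snd z) - supp_fun (X (fst z)) u (snd z)\<bar>))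
     \<in> borel_measurable (M \<Otimes>\<^sub>M lborel)" by (rule integrand_meas[OF frv assms])
  then have "case_prod (\<lambda>\<alpha> \<omega>. ennreal (indicator {0..1} \<alpha> * \<bar>supp_fun B u \<alpha> - Y u \<alpha> \<omega>\<bar>))
     \<in> borel_measurable (lborel \<Otimes>\<^sub>M M)"
    by (subst measurable_pair_swap_iff) (simp add: Y_def split_beta')
  then show ?thesis unfolding K_def[abs_def] by (rule borel_measurable_nn_integral)
qed

lemma K_eq: assumes "u \<in> {-1,1}"
  shows "K B u \<alpha> = ennreal (indicator {0..1} \<alpha> * G u \<alpha> (supp_fun B u \<alpha>))"
proof (cases "\<alpha> \<in> {0..1}")
  case True
  then show ?thesis unfolding K_def using Gn_eq[OF assms True] by simp
qed (simp add: K_def)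

definition "Bm = (\<lambda>x. Sup (insert 0 {\<alpha> \<in> {0<..1}. - med (-1) \<alpha> \<le> x \<and> x \<le> med 1 \<alpha>}))"

lemma Bm: "Bm \<in> Fc" "\<And>\<alpha>. \<alpha> \<in> {0<..1} \<Longrightarrow> supp_fun Bm 1 \<alpha> = med 1 \<alpha> \<and> supp_fun Bm (-1) \<alpha> = med (-1) \<alpha>"
  unfolding Bm_def
  by (rule construct[OF med_anti med_anti med_sum med_LC med_LC]; auto)+

lemma Bm_sf: "u \<in> {-1,1} \<Longrightarrow> \<alpha> \<in> {0<..1} \<Longrightarrow> supp_fun Bm u \<alpha> = med u \<alpha>"
  using Bm(2) by auto

end


context fzr
begin

lemma G_nn: "0 \<le> G u \<alpha> t"
  unfolding G_def by (rule integral_nonneg_AE) auto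

lemma pt_ineq:
  assumes A: "A \<in> Fc" and U: "U \<in> Fc" and V: "V \<in> Fc" and u: "u \<in> {-1,1}" and a: "\<alpha> \<in> {0<..1}"
    and bt: "\<bar>supp_fun A u \<alpha> - supp_fun V u \<alpha>\<bar> = \<bar>supp_fun A u \<alpha> - supp_fun U u \<alpha>\<bar> + \<bar>supp_fun U u \<alpha> - supp_fun V u \<alpha>\<bar>"
  shows "K U u \<alpha> + K Bm u \<alpha> \<le> K V u \<alpha> + K A u \<alpha>"
proof -
  have a01: "\<alpha> \<in> {0..1}" using a by auto
  let ?G = "G u \<alpha>"
  have g1: "?G (supp_fun U u \<alpha>) \<le> max (?G (supp_fun A u \<alpha>)) (?G (supp_fun V u \<alpha>))"
    by (rule G_between[OF u a01]) (use between_real[OF bt] in auto)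
  have g2: "?G (supp_fun Bm u \<alpha>) \<le> ?G t" for t
    using G_min[OF u a01, of t] Bm_sf[OF u a] by simp
  have "?G (supp_fun U u \<alpha>) + ?G (supp_fun Bm u \<alpha>) \<le> ?G (supp_fun V u \<alpha>) + ?G (supp_fun A u \<alpha>)"
    using g1 g2[of "supp_fun A u \<alpha>"] g2[of "supp_fun V u \<alpha>"] by (auto simp: max_def split: if_splits)
  then have "ennreal (?G (supp_fun U u \<alpha>)) + ennreal (?G (supp_fun Bm u \<alpha>))
      \<le> ennreal (?G (supp_fun V u \<alpha>)) + ennreal (?G (supp_fun A u \<alpha>))"
    by (simp add: G_nn ennreal_plus[symmetric] del: ennreal_plus)
  then show ?thesis using a01 by (simp add: K_eq[OF u])
qed

lemma pt_ineq2:
  assumes A: "A \<in> Fc" and u: "u \<in> {-1,1}" and a: "\<alpha> \<in> {0<..1}"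
  shows "K Bm u \<alpha> \<le> K A u \<alpha>"
proof -
  have a01: "\<alpha> \<in> {0..1}" using a by auto
  have "G u \<alpha> (supp_fun Bm u \<alpha>) \<le> G u \<alpha> (supp_fun A u \<alpha>)"
    using G_min[OF u a01] Bm_sf[OF u a] by simp
  then show ?thesis using a01 by (auto simp: K_eq[OF u] intro!: ennreal_leI)
qed

lemma K_out: "u \<in> {-1,1} \<Longrightarrow> \<alpha> \<notin> {0..1} \<Longrightarrow> K B u \<alpha> = 0"
  by (simp add: K_eq)

lemma key:
  assumes A: "A \<in> Fc" and U: "U \<in> Fc" and V: "V \<in> Fc"
    and eq: "rho1 A V = rho1 A U + rho1 U V"
    and fA: "eB A < \<infinity>" and AB: "eB A \<le> eB Bm"
  shows "eB U \<le> eB V"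
proof -
  have AE0: "AE \<alpha> in lborel. \<alpha> \<noteq> 0" by (rule AE_lborel_singleton)
  have Iu: "(\<integral>\<^sup>+\<alpha>. K U u \<alpha> \<partial>lborel) + (\<integral>\<^sup>+\<alpha>. K Bm u \<alpha> \<partial>lborel)
      \<le> (\<integral>\<^sup>+\<alpha>. K V u \<alpha> \<partial>lborel) + (\<integral>\<^sup>+\<alpha>. K A u \<alpha> \<partial>lborel)" if u: "u \<in> {-1,1}" for u
  proof -
    have "(\<integral>\<^sup>+\<alpha>. K U u \<alpha> \<partial>lborel) + (\<integral>\<^sup>+\<alpha>. K Bm u \<alpha> \<partial>lborel) = (\<integral>\<^sup>+\<alpha>. K U u \<alpha> + K Bm u \<alpha> \<partial>lborel)"
      by (rule nn_integral_add[symmetric]) (use K_meas U Bm(1) u in auto)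
    also have "\<dots> \<le> (\<integral>\<^sup>+\<alpha>. K V u \<alpha> + K A u \<alpha> \<partial>lborel)"
    proof (rule nn_integral_mono_AE)
      show "AE \<alpha> in lborel. K U u \<alpha> + K Bm u \<alpha> \<le> K V u \<alpha> + K A u \<alpha>"
        using between_AE[OF A U V eq u] AE0
      proof eventually_elim
        case (elim \<alpha>)
        show ?case
        proof (cases "\<alpha> \<in> {0..1}")
          case True
          then have "\<alpha> \<in> {0<..1}" using elim by auto
          then show ?thesis using pt_ineq[OF A U V u] elim True by auto
        qed (simp add: K_out[OF u])
      qed
    qed
    also have "\<dots> = (\<integral>\<^sup>+\<alpha>. K V u \<alpha> \<partial>lborel) + (\<integral>\<^sup>+\<alpha>. K A u \<alpha> \<partial>lborel)"
      by (rule nn_integral_add) (use K_meas V A u in auto)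
    finally show ?thesis .
  qed
  have Ib: "(\<integral>\<^sup>+\<alpha>. K Bm u \<alpha> \<partial>lborel) \<le> (\<integral>\<^sup>+\<alpha>. K A u \<alpha> \<partial>lborel)" if u: "u \<in> {-1,1}" for u
  proof (rule nn_integral_mono_AE)
    show "AE \<alpha> in lborel. K Bm u \<alpha> \<le> K A u \<alpha>"
      using AE0
    proof eventually_elim
      case (elim \<alpha>)
      show ?case
      proof (cases "\<alpha> \<in> {0..1}")
        case True
        then have "\<alpha> \<in> {0<..1}" using elim by auto
        then show ?thesis using pt_ineq2[OF A u] by auto
      qed (simp add: K_out[OF u])
    qed
  qed
  let ?h = "ennreal (1/2)"
  let ?I = "\<lambda>B u. \<integral>\<^sup>+\<alpha>. K B u \<alpha> \<partial>lborel"
  have eBs: "eB B = ?h * ?I B (-1) + ?h * ?I B 1" if "B \<in> Fc" for B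
    using eB_K[OF that] by simp
  have "eB U + eB Bm = ?h * (?I U (-1) + ?I Bm (-1)) + ?h * (?I U 1 + ?I Bm 1)"
    unfolding eBs[OF U] eBs[OF Bm(1)] by (simp add: distrib_left add_ac)
  also have "\<dots> \<le> ?h * (?I V (-1) + ?I A (-1)) + ?h * (?I V 1 + ?I A 1)"
    by (intro add_mono mult_left_mono Iu) auto
  also have "\<dots> = eB V + eB A"
    unfolding eBs[OF V] eBs[OF A] by (simp add: distrib_left add_ac)
  finally have s: "eB U + eB Bm \<le> eB V + eB A" .
  have "eB Bm \<le> eB A"
    unfolding eBs[OF Bm(1)] eBs[OF A] by (intro add_mono mult_left_mono Ib) auto
  then have fB: "eB Bm \<noteq> \<infinity>" using fA by auto
  have "eB U + eB Bm \<le> eB V + eB Bm"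
    using s add_left_mono[OF AB, of "eB V"] by (rule order.trans)
  then have "eB Bm + eB U \<le> eB Bm + eB V" by (simp add: add.commute)
  then show ?thesis using fB ennreal_add_left_cancel_le by auto
qed

lemma D1_eq: "D1 M X B = (if eB B = \<infinity> then 0 else 1 / (1 + enn2real (eB B)))"
  unfolding D1_def eB_def Let_def by simp

end



lemma inv_le_real:
  fixes a b :: real
  assumes "0 \<le> a" "0 \<le> b" "1/(1+b) \<le> 1/(1+a)"
  shows "a \<le> b"
proof -
  have p: "0 < 1 + a" "0 < 1 + b" using assms by auto
  then have "1 + a \<le> 1 + b" using assms(3) by (simp add: divide_simps)
  then show ?thesis by simp
qed

context fzr
begin

lemma D1_rng: "0 \<le> D1 M X B \<and> D1 M X B \<le> 1"
proof -
  have h: "0 \<le> 1/(1+x) \<and> 1/(1+x) \<le> (1::real)" if "0 \<le> x" for x using that by (simp add: divide_simps)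
  show ?thesis unfolding D1_eq using h[of "enn2real (eB B)"] by simp
qed

lemma main:
  assumes A: "A \<in> Fc" and opt: "D1 M X A = (SUP B\<in>Fc. D1 M X B)"
    and U: "U \<in> Fc" and V: "V \<in> Fc" and eq: "rho1 A V = rho1 A U + rho1 U V"
  shows "D1 M X A \<ge> D1 M X U \<and> D1 M X U \<ge> D1 M X V"
proof -
  have bdd: "bdd_above (D1 M X ` Fc)"
    by (rule bdd_aboveI[where M=1]) (use D1_rng in auto)
  have sup: "D1 M X B \<le> D1 M X A" if "B \<in> Fc" for B
    unfolding opt by (rule cSUP_upper[OF that bdd])
  have "D1 M X V \<le> D1 M X U"
  proof (cases "eB V = \<infinity> \<or> eB A = \<infinity>")
    case True
    then show ?thesis
    proof
      assume "eB V = \<infinity>" then show ?thesis using D1_rng[of U] by (simp add: D1_eq)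
    next
      assume "eB A = \<infinity>"
      then have "D1 M X A = 0" by (simp add: D1_eq)
      then show ?thesis using sup[OF V] D1_rng[of U] by simp
    qed
  next
    case False
    then have fA: "eB A < \<infinity>" and fV: "eB V < \<infinity>" by (auto simp: less_top)
    have AB: "eB A \<le> eB Bm"
    proof (cases "eB Bm = \<infinity>")
      case False
      have "D1 M X Bm \<le> D1 M X A" by (rule sup[OF Bm(1)])
      moreover have "D1 M X Bm = 1 / (1 + enn2real (eB Bm))" using False by (simp add: D1_eq)
      moreover have "eB A \<noteq> \<infinity>" using fA by auto
      then have "D1 M X A = 1 / (1 + enn2real (eB A))" by (simp add: D1_eq)
      ultimately have "1 / (1 + enn2real (eB Bm)) \<le> 1 / (1 + enn2real (eB A))" by simp
      then have "enn2real (eB A) \<le> enn2real (eB Bm)"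
        by (rule inv_le_real[OF enn2real_nonneg enn2real_nonneg])
      then have le: "ennreal (enn2real (eB A)) \<le> ennreal (enn2real (eB Bm))" by (rule ennreal_leI)
      have e1: "ennreal (enn2real (eB A)) = eB A" using fA by simp
      have "eB Bm < \<infinity>" using False by (simp add: less_top)
      then have e2: "ennreal (enn2real (eB Bm)) = eB Bm" by simp
      show ?thesis using le unfolding e1 e2 .
    qed simp
    have UV: "eB U \<le> eB V" by (rule key[OF A U V eq fA AB])
    then have fU: "eB U < \<infinity>" using fV by auto
    have fV': "eB V < top" using fV by simp
    have "enn2real (eB U) \<le> enn2real (eB V)" by (rule enn2real_mono[OF UV fV'])
    then have "1 / (1 + enn2real (eB V)) \<le> 1 / (1 + enn2real (eB U))"
      by (intro divide_left_mono mult_pos_pos add_pos_nonneg) auto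
    moreover have "eB U \<noteq> \<infinity>" "eB V \<noteq> \<infinity>" using fU fV by auto
    ultimately show ?thesis by (simp add: D1_eq)
  qed
  then show ?thesis using sup[OF U] by simp
qed

end

theorem theorem4p3:
  fixes M :: "'w measure" and X :: "'w \<Rightarrow> fuzzy"
  assumes "prob_space M"
    and "fuzzy_rv M X"
    and "(\<integral>\<^sup>+ \<omega>. ennreal (norm0 (X \<omega>)) \<partial>M) < \<infinity>"
    and "A \<in> Fc"
    and "D1 M X A = (SUP B\<in>Fc. D1 M X B)"
    and "U \<in> Fc" and "V \<in> Fc"
    and "rho1 A V = rho1 A U + rho1 U V"
  shows "D1 M X A \<ge> D1 M X U \<and> D1 M X U \<ge> D1 M X V"
proof -
  interpret fzr M X
    by (rule fzr.intro[OF assms(1)], unfold_locales) (use assms in auto)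
  show ?thesis by (rule main[OF assms(4-8)])
qed


end
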